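(* Every cancellative monoid that is left-amenable or right-amenable is sofic.
   Context: A monoid $M$ is cancellative if $st=st'$ implies $t=t'$ and $ts=t's$ implies $t=t'$. $M$ is left-amenable (resp. right-amenable) if there is a mean on $\ell^\infty(M)$ (a positive linear functional of norm one taking value $1$ on the constant function $1$) invariant under all left translations (resp. all right translations) by elements of $M$. For a non-empty finite set $X$, $\mathrm{Map}(X)$ is the monoid of all maps $X\to X$ under composition (identity $\mathrm{Id}_X$) with the Hamming metric $d_X(f,g)=|\{x\in X : f(x)\ne g(x)\}|/|X|$. For finite $K\subset M$ and $\varepsilon,\alpha>0$, a map $\varphi\colon M\to\mathrm{Map}(X)$ is a $(K,\varepsilon)$-morphism if $d_X(\varphi(k_1k_2),\varphi(k_1)\varphi(k_2))\le\varepsilon$ for all $k_1,k_2\in K$ and $d_X(\varphi(1_M),\mathrm{Id}_X)\le\varepsilon$; it is $(K,\alpha)$-injective if $d_X(\varphi(k_1),\varphi(k_2))\ge\alpha$ for all distinct $k_1,k_2\in K$. $M$ is sofic if for every finite $K\subset M$ and every $\varepsilon>0$ there exist a non-empty finite set $X$ and a $(K,1-\varepsilon)$-injective $(K,\varepsilon)$-morphism $\varphi\colon M\to\mathrm{Map}(X)$. *)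

theory Defs
  imports Complex_Main
begin

definition cancellative :: "'a::monoid_mult itself \<Rightarrow> bool" where
  "cancellative _ \<longleftrightarrow>
     (\<forall>s t t'::'a. s * t = s * t' \<longrightarrow> t = t') \<and>
     (\<forall>s t t'::'a. t * s = t' * s \<longrightarrow> t = t')"

definition linf :: "('a \<Rightarrow> real) \<Rightarrow> bool" where
  "linf f \<longleftrightarrow> (\<exists>B. \<forall>x. \<bar>f x\<bar> \<le> B)"

text \<open>A mean: positive linear functional on ell-infinity of norm one with value 1 on
  the constant function 1. (Norm one: |m f| \<le> sup norm of f, attained at 1.)\<close>
definition is_mean :: "(('a \<Rightarrow> real) \<Rightarrow> real) \<Rightarrow> bool" where
  "is_mean m \<longleftrightarrow>
     (\<forall>f g. linf f \<longrightarrow> linf g \<longrightarrow> m (\<lambda>x. f x + g x) = m f + m g) \<and>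
     (\<forall>c f. linf f \<longrightarrow> m (\<lambda>x. c * f x) = c * m f) \<and>
     (\<forall>f. linf f \<longrightarrow> (\<forall>x. 0 \<le> f x) \<longrightarrow> 0 \<le> m f) \<and>
     (\<forall>f. linf f \<longrightarrow> \<bar>m f\<bar> \<le> (SUP x. \<bar>f x\<bar>)) \<and>
     m (\<lambda>_. 1) = 1"

definition left_amenable :: "'a::monoid_mult itself \<Rightarrow> bool" where
  "left_amenable _ \<longleftrightarrow> (\<exists>m :: ('a \<Rightarrow> real) \<Rightarrow> real. is_mean m \<and>
     (\<forall>s f. linf f \<longrightarrow> m (\<lambda>x. f (s * x)) = m f))"

definition right_amenable :: "'a::monoid_mult itself \<Rightarrow> bool" where
  "right_amenable _ \<longleftrightarrow> (\<exists>m :: ('a \<Rightarrow> real) \<Rightarrow> real. is_mean m \<and>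
     (\<forall>s f. linf f \<longrightarrow> m (\<lambda>x. f (x * s)) = m f))"

text \<open>Normalized Hamming distance on Map(X); finite sets X are taken as finite sets of
  naturals, and elements of Map(X) as functions mapping X into X (only values on X matter).\<close>
definition hamming :: "nat set \<Rightarrow> (nat \<Rightarrow> nat) \<Rightarrow> (nat \<Rightarrow> nat) \<Rightarrow> real" where
  "hamming X f g = real (card {x\<in>X. f x \<noteq> g x}) / real (card X)"

definition sofic :: "'a::monoid_mult itself \<Rightarrow> bool" where
  "sofic _ \<longleftrightarrow> (\<forall>(K::'a set) (\<epsilon>::real). finite K \<longrightarrow> \<epsilon> > 0 \<longrightarrow>
     (\<exists>(X::nat set) (\<phi>::'a \<Rightarrow> nat \<Rightarrow> nat). finite X \<and> X \<noteq> {} \<and>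
        (\<forall>a. \<phi> a ` X \<subseteq> X) \<and>
        (\<forall>k1\<in>K. \<forall>k2\<in>K. hamming X (\<phi> (k1 * k2)) (\<phi> k1 \<circ> \<phi> k2) \<le> \<epsilon>) \<and>
        hamming X (\<phi> 1) id \<le> \<epsilon> \<and>
        (\<forall>k1\<in>K. \<forall>k2\<in>K. k1 \<noteq> k2 \<longrightarrow> hamming X (\<phi> k1) (\<phi> k2) \<ge> 1 - \<epsilon>)))"

end

theory Submission
  imports Defs "HOL-Analysis.Analysis"
begin


lemma sum_ind_card:
  fixes T :: "'b set"
  assumes "finite T"
  shows "(\<Sum>x\<in>T. (if Q x then 1 else 0::real)) = real (card {x\<in>T. Q x})"
proof -
  have "{x\<in>T. Q x} = T \<inter> Collect Q" by auto
  then show ?thesis using assms by (simp add: sum.If_cases)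
qed

lemma namioka:
  fixes act :: "'a \<Rightarrow> 'b \<Rightarrow> 'b" and K :: "'a set" and T :: "'b set"
  assumes "finite T"
  shows "\<And>p. (\<forall>x. 0 \<le> p x) \<Longrightarrow> (\<forall>x. x \<notin> T \<longrightarrow> p x = 0) \<Longrightarrow> card {x\<in>T. p x > 0} = n \<Longrightarrow>
    (\<Sum>x\<in>T. p x) > 0 \<Longrightarrow>
    (\<Sum>k\<in>K. \<Sum>x\<in>T. max 0 (p x - p (act k x))) \<le> e * (\<Sum>x\<in>T. p x) \<Longrightarrow>
    \<exists>F. F \<subseteq> T \<and> F \<noteq> {} \<and> (\<Sum>k\<in>K. real (card {x\<in>F. act k x \<notin> F})) \<le> e * real (card F)"
proof (induction n rule: less_induct)
  case (less n p)
  define P where "P = {x\<in>T. p x > 0}"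
  have finP: "finite P" using assms P_def by auto
  have Pne: "P \<noteq> {}"
  proof
    assume "P = {}"
    then have "\<forall>x\<in>T. p x = 0" using less.prems(1) P_def by (auto simp: order_le_less)
    then show False using less.prems(4) by simp
  qed
  define v where "v = Min (p ` P)"
  have vmem: "v \<in> p ` P" using finP Pne v_def by simp
  have vpos: "v > 0" using vmem P_def by auto
  have vle: "\<And>x. x \<in> P \<Longrightarrow> v \<le> p x" using finP v_def by simp
  have vals: "\<And>y. p y = 0 \<or> (y \<in> P \<and> v \<le> p y)"
    using less.prems(1,2) vle P_def by (metis (mono_tags, lifting) mem_Collect_eq order_le_less)
  define ind where "ind = (\<lambda>y. if y \<in> P then 1 else (0::real))"
  define p' where "p' = (\<lambda>y. max 0 (p y - v))"
  have decomp: "\<And>y. p y = v * ind y + p' y"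
  proof -
    fix y
    show "p y = v * ind y + p' y"
    proof (cases "y \<in> P")
      case True
      then show ?thesis using vle[OF True] unfolding ind_def p'_def by simp
    next
      case False
      then have "p y = 0" using vals by blast
      then show ?thesis using False vpos unfolding ind_def p'_def by simp
    qed
  qed
  have ident: "\<And>x y. max 0 (p x - p y) = v * max 0 (ind x - ind y) + max 0 (p' x - p' y)"
  proof -
    fix x y
    show "max 0 (p x - p y) = v * max 0 (ind x - ind y) + max 0 (p' x - p' y)"
      using vals[of x] vals[of y] vpos unfolding ind_def p'_def P_def by auto
  qed
  have sumind: "\<And>k. (\<Sum>x\<in>T. max 0 (ind x - ind (act k x))) = real (card {x\<in>P. act k x \<notin> P})"
  proof -
    fix k
    have "(\<Sum>x\<in>T. max 0 (ind x - ind (act k x))) = (\<Sum>x\<in>T. (if x \<in> P \<and> act k x \<notin> P then 1 else 0::real))"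
      by (rule sum.cong) (auto simp: ind_def)
    also have "\<dots> = real (card {x\<in>T. x \<in> P \<and> act k x \<notin> P})" by (rule sum_ind_card[OF assms])
    also have "{x\<in>T. x \<in> P \<and> act k x \<notin> P} = {x\<in>P. act k x \<notin> P}" using P_def by auto
    finally show "(\<Sum>x\<in>T. max 0 (ind x - ind (act k x))) = real (card {x\<in>P. act k x \<notin> P})" .
  qed
  have sumP: "(\<Sum>x\<in>T. p x) = v * real (card P) + (\<Sum>x\<in>T. p' x)"
  proof -
    have "(\<Sum>x\<in>T. p x) = (\<Sum>x\<in>T. v * ind x + p' x)" using decomp by simp
    also have "\<dots> = v * (\<Sum>x\<in>T. ind x) + (\<Sum>x\<in>T. p' x)" by (simp add: sum.distrib sum_distrib_left)
    also have "(\<Sum>x\<in>T. ind x) = real (card P)"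
      unfolding ind_def using sum_ind_card[OF assms, of "\<lambda>x. x \<in> P"] P_def
      by (metis (no_types, lifting) Collect_cong mem_Collect_eq)
    finally show ?thesis .
  qed
  define C where "C = (\<Sum>k\<in>K. real (card {x\<in>P. act k x \<notin> P}))"
  define \<Phi>' where "\<Phi>' = (\<Sum>k\<in>K. \<Sum>x\<in>T. max 0 (p' x - p' (act k x)))"
  have sumPhi: "(\<Sum>k\<in>K. \<Sum>x\<in>T. max 0 (p x - p (act k x))) = v * C + \<Phi>'"
  proof -
    have "(\<Sum>k\<in>K. \<Sum>x\<in>T. max 0 (p x - p (act k x))) =
       (\<Sum>k\<in>K. v * (\<Sum>x\<in>T. max 0 (ind x - ind (act k x))) + (\<Sum>x\<in>T. max 0 (p' x - p' (act k x))))"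
      by (simp add: ident sum.distrib sum_distrib_left)
    then show ?thesis unfolding C_def \<Phi>'_def by (simp add: sumind sum.distrib sum_distrib_left)
  qed
  show ?case
  proof (cases "C \<le> e * real (card P)")
    case True
    then show ?thesis using Pne P_def C_def by (intro exI[of _ P]) auto
  next
    case False
    have Phi'nn: "\<Phi>' \<ge> 0" unfolding \<Phi>'_def by (intro sum_nonneg) auto
    have "v * C > v * (e * real (card P))" using False vpos by simp
    then have lt: "\<Phi>' < e * (\<Sum>x\<in>T. p' x)" using less.prems(5) sumPhi sumP by (simp add: algebra_simps)
    have "(\<Sum>x\<in>T. p' x) \<noteq> 0" using lt Phi'nn by auto
    moreover have "(\<Sum>x\<in>T. p' x) \<ge> 0" unfolding p'_def by (intro sum_nonneg) auto
    ultimately have pos': "(\<Sum>x\<in>T. p' x) > 0" by simp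
    obtain x0 where x0: "x0 \<in> P" "p x0 = v" using vmem by auto
    have sub: "{x\<in>T. p' x > 0} \<subseteq> P - {x0}" unfolding p'_def P_def using x0 vpos by auto
    have "card {x\<in>T. p' x > 0} \<le> card (P - {x0})" using finP sub by (intro card_mono) auto
    also have "\<dots> < card P" using finP x0 by (meson card_Diff1_less)
    finally have "card {x\<in>T. p' x > 0} < n" using less.prems(3) P_def by simp
    moreover have "\<forall>x. 0 \<le> p' x" unfolding p'_def by simp
    moreover have "\<forall>x. x \<notin> T \<longrightarrow> p' x = 0" unfolding p'_def using less.prems(2) vpos by simp
    ultimately show ?thesis using less.IH[OF _ _ _ refl pos'] lt \<Phi>'_def by (meson less_eq_real_def)
  qed
qed



definition cvx :: "('i \<Rightarrow> real) set \<Rightarrow> bool" where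
  "cvx L \<longleftrightarrow> (\<forall>x\<in>L. \<forall>y\<in>L. \<forall>u::real. 0 \<le> u \<and> u \<le> 1 \<longrightarrow> (\<lambda>i. u * x i + (1 - u) * y i) \<in> L)"

definition aff :: "('i \<Rightarrow> real) set \<Rightarrow> (('i \<Rightarrow> real) \<Rightarrow> real) \<Rightarrow> bool" where
  "aff L f \<longleftrightarrow> (\<forall>x\<in>L. \<forall>y\<in>L. \<forall>u::real. 0 \<le> u \<and> u \<le> 1 \<longrightarrow>
      f (\<lambda>i. u * x i + (1 - u) * y i) = u * f x + (1 - u) * f y)"

lemma neg_coeff:
  fixes a b X Y :: real
  assumes "\<forall>r>0. 0 \<le> a * (X - r) + b * Y"
  shows "a \<le> 0"
proof (rule ccontr)
  assume "\<not> a \<le> 0"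
  then have a: "a > 0" by simp
  define r where "r = (\<bar>a * X\<bar> + \<bar>b * Y\<bar> + 1) / a"
  have r: "r > 0" using a unfolding r_def by (simp add: add_pos_nonneg)
  have "a * r = \<bar>a * X\<bar> + \<bar>b * Y\<bar> + 1" using a unfolding r_def by simp
  then have "a * (X - r) + b * Y < 0" by (simp add: algebra_simps)
  then show False using assms r by force
qed

lemma two_minimax:
  assumes cv: "cvx L" and af: "aff L f" and ag: "aff L g"
    and h: "\<forall>x\<in>L. f x \<le> c \<or> g x \<le> c"
  shows "\<exists>s. 0 \<le> s \<and> s \<le> 1 \<and> (\<forall>x\<in>L. s * f x + (1 - s) * g x \<le> c)"
proof (cases "L = {}")
  case True then show ?thesis by (intro exI[of _ 0]) auto
next
  case False
  then obtain x0 where x0: "x0 \<in> L" by auto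
  define S where "S = {(f x - c - r1, g x - c - r2) | x r1 r2. x \<in> L \<and> r1 > 0 \<and> r2 > 0}"
  have "convex S"
    unfolding convex_def
  proof (intro ballI allI impI)
    fix w z :: "real \<times> real" and u v :: real
    assume w: "w \<in> S" and z: "z \<in> S" and uv0: "0 \<le> u" "0 \<le> v" "u + v = 1"
    then have uv: "0 \<le> u \<and> 0 \<le> v \<and> u + v = 1" by simp
    obtain x r1 r2 where wx: "w = (f x - c - r1, g x - c - r2)" "x \<in> L" "r1 > 0" "r2 > 0" using w S_def by auto
    obtain y s1 s2 where zy: "z = (f y - c - s1, g y - c - s2)" "y \<in> L" "s1 > 0" "s2 > 0" using z S_def by auto
    have v: "v = 1 - u" using uv by simp
    define xy where "xy = (\<lambda>i. u * x i + (1 - u) * y i)"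
    have xyL: "xy \<in> L" using cv wx zy uv unfolding cvx_def xy_def by auto
    have fxy: "f xy = u * f x + (1 - u) * f y" using af wx zy uv unfolding aff_def xy_def by auto
    have gxy: "g xy = u * g x + (1 - u) * g y" using ag wx zy uv unfolding aff_def xy_def by auto
    have p1: "u * r1 + (1 - u) * s1 > 0"
      using uv wx zy v by (smt (verit) mult_nonneg_nonneg mult_pos_pos)
    have p2: "u * r2 + (1 - u) * s2 > 0"
      using uv wx zy v by (smt (verit) mult_nonneg_nonneg mult_pos_pos)
    have "u *\<^sub>R w + v *\<^sub>R z = (u*(f x - c - r1) + (1-u)*(f y - c - s1), u*(g x - c - r2) + (1-u)*(g y - c - s2))"
      using wx zy v by simp
    also have "\<dots> = (f xy - c - (u * r1 + (1 - u) * s1), g xy - c - (u * r2 + (1 - u) * s2))"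
      unfolding fxy gxy by (simp add: algebra_simps)
    finally have "u *\<^sub>R w + v *\<^sub>R z = (f xy - c - (u * r1 + (1 - u) * s1), g xy - c - (u * r2 + (1 - u) * s2))" .
    then show "u *\<^sub>R w + v *\<^sub>R z \<in> S" unfolding S_def using xyL p1 p2 by blast
  qed
  moreover have "0 \<notin> S"
  proof
    assume "0 \<in> S"
    then obtain x r1 r2 where "0 = (f x - c - r1, g x - c - r2)" "x \<in> L" "r1 > 0" "r2 > 0" using S_def by auto
    then show False using h by (auto simp: zero_prod_def)
  qed
  ultimately obtain a where a: "a \<noteq> 0" "\<forall>w\<in>S. 0 \<le> inner a w"
    using separating_hyperplane_set_0 by blast
  obtain a1 a2 where a12: "a = (a1, a2)" by (cases a)
  have key: "\<And>x (r1::real) (r2::real). x \<in> L \<Longrightarrow> r1 > 0 \<Longrightarrow> r2 > 0 \<Longrightarrow> 0 \<le> a1 * (f x - c - r1) + a2 * (g x - c - r2)"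
  proof -
    fix x and r1 r2 :: real assume "x \<in> L" "r1 > 0" "(r2::real) > 0"
    then have "(f x - c - r1, g x - c - r2) \<in> S" unfolding S_def by blast
    then show "0 \<le> a1 * (f x - c - r1) + a2 * (g x - c - r2)" using a a12 by (auto simp: inner_prod_def)
  qed
  have a1: "a1 \<le> 0"
  proof (rule neg_coeff[of a1 "f x0 - c" a2 "g x0 - c - 1"], intro allI impI)
    fix r :: real assume "r > 0"
    then show "0 \<le> a1 * (f x0 - c - r) + a2 * (g x0 - c - 1)" using key[OF x0, of r 1] by simp
  qed
  have a2: "a2 \<le> 0"
  proof (rule neg_coeff[of a2 "g x0 - c" a1 "f x0 - c - 1"], intro allI impI)
    fix r :: real assume "r > 0"
    then show "0 \<le> a2 * (g x0 - c - r) + a1 * (f x0 - c - 1)" using key[OF x0, of 1 r] by simp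
  qed
  have "a1 \<noteq> 0 \<or> a2 \<noteq> 0" using a a12 by (auto simp: zero_prod_def)
  then have ab: "a1 + a2 < 0" using a1 a2 by linarith
  define s where "s = a1 / (a1 + a2)"
  have s01: "0 \<le> s" "s \<le> 1" using a1 a2 ab unfolding s_def by (auto simp: divide_simps)
  have "s * f x + (1 - s) * g x \<le> c" if x: "x \<in> L" for x
  proof -
    define X where "X = - a1 * (f x - c) - a2 * (g x - c)"
    have X: "X \<le> 0"
    proof (rule ccontr)
      assume "\<not> X \<le> 0"
      then have Xp: "X > 0" by simp
      define r where "r = X / (- 2 * (a1 + a2))"
      have r: "r > 0" using Xp ab unfolding r_def by (simp add: divide_pos_neg)
      have "0 \<le> a1 * (f x - c - r) + a2 * (g x - c - r)" using key[OF x r r] .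
      moreover have "(a1 + a2) * r = - X / 2" using ab unfolding r_def by (simp add: field_simps)
      ultimately show False using Xp unfolding X_def by (simp add: algebra_simps)
    qed
    have ne: "a1 + a2 \<noteq> 0" using ab by simp
    have s1: "1 - s = a2 / (a1 + a2)" using ne unfolding s_def by (simp add: field_simps)
    have "s * (f x - c) + (1 - s) * (g x - c) = (a1 * (f x - c) + a2 * (g x - c)) / (a1 + a2)"
      unfolding s1 unfolding s_def by (simp add: add_divide_distrib)
    also have "\<dots> = - X / (a1 + a2)" unfolding X_def by simp
    also have "\<dots> \<le> 0" using X ab by (simp add: divide_nonpos_neg)
    finally show ?thesis by (simp add: algebra_simps)
  qed
  then show ?thesis using s01 by blast
qed

lemma kneser:
  assumes "finite Z" "Z \<noteq> {}"
  shows "\<And>L. cvx L \<Longrightarrow> (\<forall>z\<in>Z. aff L (\<phi> z)) \<Longrightarrow> (\<forall>x\<in>L. \<exists>z\<in>Z. \<phi> z x \<le> c) \<Longrightarrow>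
    \<exists>t. (\<forall>z\<in>Z. 0 \<le> t z) \<and> sum t Z = 1 \<and> (\<forall>x\<in>L. (\<Sum>z\<in>Z. t z * \<phi> z x) \<le> c)"
  using assms
proof (induction Z rule: finite_ne_induct)
  case (singleton z)
  then show ?case by (intro exI[of _ "\<lambda>_. 1"]) auto
next
  case (insert z Z L)
  define L' where "L' = {x\<in>L. \<phi> z x > c}"
  have cvL': "cvx L'"
    unfolding cvx_def
  proof (intro ballI allI impI)
    fix x y u assume x: "x \<in> L'" and y: "y \<in> L'" and u: "0 \<le> u \<and> u \<le> (1::real)"
    have "(\<lambda>i. u * x i + (1 - u) * y i) \<in> L" using insert.prems(1) x y u unfolding cvx_def L'_def by auto
    moreover have "\<phi> z (\<lambda>i. u * x i + (1 - u) * y i) = u * \<phi> z x + (1 - u) * \<phi> z y"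
      using insert.prems(2) x y u unfolding aff_def L'_def by auto
    moreover have "u * \<phi> z x + (1 - u) * \<phi> z y > c"
    proof -
      have "u * \<phi> z x \<ge> u * c" using x u L'_def by (simp add: mult_left_mono)
      moreover have "(1 - u) * \<phi> z y \<ge> (1 - u) * c" using y u L'_def by (simp add: mult_left_mono)
      moreover have "u * \<phi> z x > u * c \<or> (1 - u) * \<phi> z y > (1 - u) * c"
        using x y u L'_def by (cases "u = 0") auto
      ultimately show ?thesis by (auto simp: algebra_simps)
    qed
    ultimately show "(\<lambda>i. u * x i + (1 - u) * y i) \<in> L'" unfolding L'_def by simp
  qed
  have afL': "\<forall>z'\<in>Z. aff L' (\<phi> z')" using insert.prems(2) unfolding aff_def L'_def by auto
  have cov': "\<forall>x\<in>L'. \<exists>z'\<in>Z. \<phi> z' x \<le> c" using insert.prems(3) unfolding L'_def by force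
  obtain t where t: "\<forall>z'\<in>Z. 0 \<le> t z'" "sum t Z = 1" "\<forall>x\<in>L'. (\<Sum>z'\<in>Z. t z' * \<phi> z' x) \<le> c"
    using insert.IH[OF cvL' afL' cov'] by blast
  define \<psi> where "\<psi> = (\<lambda>x. \<Sum>z'\<in>Z. t z' * \<phi> z' x)"
  have afpsi: "aff L \<psi>"
    unfolding aff_def \<psi>_def
  proof (intro ballI allI impI)
    fix x y u assume "x \<in> L" "y \<in> L" "0 \<le> u \<and> u \<le> (1::real)"
    then have hz: "\<forall>z'\<in>Z. \<phi> z' (\<lambda>i. u * x i + (1 - u) * y i) = u * \<phi> z' x + (1 - u) * \<phi> z' y"
      using insert.prems(2) unfolding aff_def by auto
    have "(\<Sum>z'\<in>Z. t z' * \<phi> z' (\<lambda>i. u * x i + (1 - u) * y i)) =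
         (\<Sum>z'\<in>Z. u * (t z' * \<phi> z' x) + (1 - u) * (t z' * \<phi> z' y))"
    proof (intro sum.cong refl)
      fix z' assume "z' \<in> Z"
      then have e: "\<phi> z' (\<lambda>i. u * x i + (1 - u) * y i) = u * \<phi> z' x + (1 - u) * \<phi> z' y" using hz by blast
      show "t z' * \<phi> z' (\<lambda>i. u * x i + (1 - u) * y i) = u * (t z' * \<phi> z' x) + (1 - u) * (t z' * \<phi> z' y)"
        unfolding e by (simp add: algebra_simps)
    qed
    also have "\<dots> = u * (\<Sum>z'\<in>Z. t z' * \<phi> z' x) + (1 - u) * (\<Sum>z'\<in>Z. t z' * \<phi> z' y)"
      by (simp add: sum.distrib sum_distrib_left)
    finally show "(\<Sum>z'\<in>Z. t z' * \<phi> z' (\<lambda>i. u * x i + (1 - u) * y i)) =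
         u * (\<Sum>z'\<in>Z. t z' * \<phi> z' x) + (1 - u) * (\<Sum>z'\<in>Z. t z' * \<phi> z' y)" .
  qed
  have "\<forall>x\<in>L. \<psi> x \<le> c \<or> \<phi> z x \<le> c" using t(3) unfolding \<psi>_def L'_def by force
  then obtain s where s: "0 \<le> s" "s \<le> 1" "\<forall>x\<in>L. s * \<psi> x + (1 - s) * \<phi> z x \<le> c"
    using two_minimax[OF insert.prems(1) afpsi] insert.prems(2) by blast
  define t' where "t' = (\<lambda>y. if y = z then 1 - s else s * t y)"
  have "\<forall>y\<in>insert z Z. 0 \<le> t' y" using s t unfolding t'_def by auto
  moreover have "sum t' (insert z Z) = 1"
  proof -
    have "sum t' (insert z Z) = (1 - s) + (\<Sum>y\<in>Z. s * t y)"
      using insert.hyps unfolding t'_def by (simp add: sum.insert) (rule sum.cong, auto)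
    then show ?thesis using t(2) by (simp add: sum_distrib_left[symmetric])
  qed
  moreover have "\<forall>x\<in>L. (\<Sum>y\<in>insert z Z. t' y * \<phi> y x) \<le> c"
  proof
    fix x assume x: "x \<in> L"
    have "(\<Sum>y\<in>insert z Z. t' y * \<phi> y x) = (1 - s) * \<phi> z x + (\<Sum>y\<in>Z. s * (t y * \<phi> y x))"
      using insert.hyps unfolding t'_def by (simp add: sum.insert) (rule sum.cong, auto)
    also have "\<dots> = s * \<psi> x + (1 - s) * \<phi> z x" unfolding \<psi>_def by (simp add: sum_distrib_left)
    finally show "(\<Sum>y\<in>insert z Z. t' y * \<phi> y x) \<le> c" using s x by simp
  qed
  ultimately show ?case by blast
qed



lemma linf_bound: "(\<And>x. \<bar>f x\<bar> \<le> B) \<Longrightarrow> linf f"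
  unfolding linf_def by blast

lemma linf_const: "linf (\<lambda>_. c)"
  by (rule linf_bound[of _ "\<bar>c\<bar>"]) simp

lemma linf_add: "linf f \<Longrightarrow> linf g \<Longrightarrow> linf (\<lambda>x. f x + g x)"
  unfolding linf_def by (meson abs_triangle_ineq add_mono order_trans)

lemma linf_scale: "linf f \<Longrightarrow> linf (\<lambda>x. c * f x)"
  unfolding linf_def
proof -
  assume "\<exists>B. \<forall>x. \<bar>f x\<bar> \<le> B"
  then obtain B where B: "\<forall>x. \<bar>f x\<bar> \<le> B" by blast
  have "\<forall>x. \<bar>c * f x\<bar> \<le> \<bar>c\<bar> * B" using B by (simp add: abs_mult mult_left_mono)
  then show "\<exists>B. \<forall>x. \<bar>c * f x\<bar> \<le> B" by blast
qed

lemma linf_diff: "linf f \<Longrightarrow> linf g \<Longrightarrow> linf (\<lambda>x. f x - g x)"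
  using linf_add[of f "\<lambda>x. (-1) * g x"] linf_scale[of g "-1"] by simp

lemma linf_sum: "finite I \<Longrightarrow> (\<And>i. i \<in> I \<Longrightarrow> linf (F i)) \<Longrightarrow> linf (\<lambda>x. \<Sum>i\<in>I. F i x)"
proof (induction I rule: finite_induct)
  case empty then show ?case using linf_const[of 0] by simp
next
  case (insert a I) then show ?case using linf_add[of "F a" "\<lambda>x. \<Sum>i\<in>I. F i x"] by simp
qed

context
  fixes m :: "('a \<Rightarrow> real) \<Rightarrow> real"
  assumes mean: "is_mean m"
begin

lemma m_add: "linf f \<Longrightarrow> linf g \<Longrightarrow> m (\<lambda>x. f x + g x) = m f + m g"
  using mean unfolding is_mean_def by blast

lemma m_scale: "linf f \<Longrightarrow> m (\<lambda>x. c * f x) = c * m f"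
  using mean unfolding is_mean_def by blast

lemma m_const: "m (\<lambda>_. c) = c"
  using m_scale[of "\<lambda>_. 1" c] linf_const[of 1] mean unfolding is_mean_def by simp

lemma m_diff: "linf f \<Longrightarrow> linf g \<Longrightarrow> m (\<lambda>x. f x - g x) = m f - m g"
  using m_add[of f "\<lambda>x. (-1) * g x"] m_scale[of g "-1"] linf_scale[of g "-1"] by simp

lemma m_sum: "finite I \<Longrightarrow> (\<And>i. i \<in> I \<Longrightarrow> linf (F i)) \<Longrightarrow> m (\<lambda>x. \<Sum>i\<in>I. F i x) = (\<Sum>i\<in>I. m (F i))"
proof (induction I rule: finite_induct)
  case empty then show ?case using m_const[of 0] by simp
next
  case (insert a I)
  have "m (\<lambda>x. \<Sum>i\<in>insert a I. F i x) = m (\<lambda>x. F a x + (\<Sum>i\<in>I. F i x))"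
    using insert.hyps by simp
  also have "\<dots> = m (F a) + m (\<lambda>x. \<Sum>i\<in>I. F i x)"
    using m_add[of "F a" "\<lambda>x. \<Sum>i\<in>I. F i x"] insert linf_sum[of I F] by simp
  finally show ?case using insert by simp
qed

lemma m_lower: "linf f \<Longrightarrow> (\<And>x. c \<le> f x) \<Longrightarrow> c \<le> m f"
proof -
  assume f: "linf f" and c: "\<And>x. c \<le> f x"
  have "0 \<le> m (\<lambda>x. f x - c)"
    using mean linf_diff[OF f linf_const[of c]] c unfolding is_mean_def by simp
  also have "\<dots> = m f - c" using m_diff[OF f linf_const[of c]] m_const[of c] by simp
  finally show ?thesis by simp
qed

end

lemma pre_cases:
  assumes inj: "inj g"
  shows "{x. g x = z} = {} \<or> (\<exists>x0. {x. g x = z} = {x0})"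
  using inj unfolding inj_def by blast

lemma pre_finite:
  assumes inj: "inj g"
  shows "finite {x. g x = z}"
  using pre_cases[OF inj, of z] by auto

lemma pre_act:
  assumes inj: "inj g"
  shows "{x. g x = g y} = {y}"
  using inj unfolding inj_def by blast

lemma cvx_box: "cvx {l :: 'i \<Rightarrow> real. \<forall>i. 0 \<le> l i \<and> l i \<le> 1}"
  unfolding cvx_def
proof (intro ballI allI impI)
  fix x y :: "'i \<Rightarrow> real" and u :: real
  assume x: "x \<in> {l. \<forall>i. 0 \<le> l i \<and> l i \<le> 1}" and y: "y \<in> {l. \<forall>i. 0 \<le> l i \<and> l i \<le> 1}"
    and u: "0 \<le> u \<and> u \<le> 1"
  have "0 \<le> u * x i + (1 - u) * y i \<and> u * x i + (1 - u) * y i \<le> 1" for i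
  proof -
    have a: "0 \<le> x i" "x i \<le> 1" "0 \<le> y i" "y i \<le> 1" using x y by blast+
    have "0 \<le> u * x i + (1 - u) * y i" using a u by simp
    moreover have "u * x i + (1 - u) * y i \<le> 1" using a u convex_bound_le[of "x i" 1 "y i" u "1 - u"] by simp
    ultimately show ?thesis by simp
  qed
  then show "(\<lambda>i. u * x i + (1 - u) * y i) \<in> {l. \<forall>i. 0 \<le> l i \<and> l i \<le> 1}" by simp
qed

lemma aff_phi: "aff L (\<lambda>l. \<Sum>k\<in>K. (l (k, z) - (\<Sum>x\<in>P k. l (k, x))))"
  unfolding aff_def
proof (intro ballI allI impI)
  fix x y :: "('a \<times> 'b) \<Rightarrow> real" and u :: real
  have "(\<Sum>k\<in>K. (u * x (k, z) + (1 - u) * y (k, z)) - (\<Sum>w\<in>P k. u * x (k, w) + (1 - u) * y (k, w)))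
      = (\<Sum>k\<in>K. u * (x (k, z) - (\<Sum>w\<in>P k. x (k, w))) + (1 - u) * (y (k, z) - (\<Sum>w\<in>P k. y (k, w))))"
  proof (intro sum.cong refl)
    fix k
    have "(\<Sum>w\<in>P k. u * x (k, w) + (1 - u) * y (k, w)) = u * (\<Sum>w\<in>P k. x (k, w)) + (1 - u) * (\<Sum>w\<in>P k. y (k, w))"
      by (simp add: sum.distrib sum_distrib_left)
    then show "(u * x (k, z) + (1 - u) * y (k, z)) - (\<Sum>w\<in>P k. u * x (k, w) + (1 - u) * y (k, w))
      = u * (x (k, z) - (\<Sum>w\<in>P k. x (k, w))) + (1 - u) * (y (k, z) - (\<Sum>w\<in>P k. y (k, w)))"
      by (simp add: right_diff_distrib)
  qed
  also have "\<dots> = u * (\<Sum>k\<in>K. x (k, z) - (\<Sum>w\<in>P k. x (k, w))) + (1 - u) * (\<Sum>k\<in>K. y (k, z) - (\<Sum>w\<in>P k. y (k, w)))"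
    by (simp add: sum.distrib sum_distrib_left)
  finally show "(\<Sum>k\<in>K. (\<lambda>i. u * x i + (1 - u) * y i) (k, z) - (\<Sum>w\<in>P k. (\<lambda>i. u * x i + (1 - u) * y i) (k, w))) =
       u * (\<Sum>k\<in>K. x (k, z) - (\<Sum>w\<in>P k. x (k, w))) + (1 - u) * (\<Sum>k\<in>K. y (k, z) - (\<Sum>w\<in>P k. y (k, w)))"
    by simp
qed

lemma folner_core:
  fixes m :: "('a \<Rightarrow> real) \<Rightarrow> real" and act :: "'a \<Rightarrow> 'a \<Rightarrow> 'a" and K :: "'a set"
  assumes mean: "is_mean m" and inv: "\<forall>k f. linf f \<longrightarrow> m (\<lambda>x. f (act k x)) = m f"
    and injact: "\<forall>k x y. act k x = act k y \<longrightarrow> x = y" and finK: "finite K" and e: "e > 0"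
  shows "\<exists>F. finite F \<and> F \<noteq> {} \<and> (\<Sum>k\<in>K. real (card {x\<in>F. act k x \<notin> F})) \<le> e * real (card F)"
proof -
  define pre where "pre = (\<lambda>k z. {x. act k x = z})"
  have inj: "\<And>k. inj (act k)" using injact unfolding inj_def by blast
  define \<Lambda> where "\<Lambda> = {l :: ('a \<times> 'a) \<Rightarrow> real. \<forall>i. 0 \<le> l i \<and> l i \<le> 1}"
  define \<phi> where "\<phi> = (\<lambda>z (l :: ('a \<times> 'a) \<Rightarrow> real). \<Sum>k\<in>K. (l (k, z) - (\<Sum>x\<in>pre k z. l (k, x))))"
  \<comment> \<open>Step 1: the mean forbids uniformly large phi\<close>
  have step1: "\<exists>z. \<phi> z l < e" if l: "l \<in> \<Lambda>" for l
  proof (rule ccontr)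
    assume "\<not> (\<exists>z. \<phi> z l < e)"
    then have ge: "\<And>z. e \<le> \<phi> z l" by (simp add: not_less)
    define A where "A = (\<lambda>k z. l (k, z))"
    define B where "B = (\<lambda>k z. \<Sum>x\<in>pre k z. l (k, x))"
    have linfA: "linf (A k)" for k
      by (rule linf_bound[of _ 1]) (use l in \<open>auto simp: A_def \<Lambda>_def\<close>)
    have linfB: "linf (B k)" for k
    proof (rule linf_bound[of _ 1])
      fix z
      show "\<bar>B k z\<bar> \<le> 1"
        using pre_cases[OF inj[of k], of z] l unfolding B_def pre_def \<Lambda>_def by auto
    qed
    have BA: "(\<lambda>y. B k (act k y)) = A k" for k
      unfolding A_def B_def pre_def using pre_act[OF inj[of k]] by simp
    have mAB: "m (A k) = m (B k)" for k
      using inv linfB[of k] BA[of k] by metis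
    have "m (\<lambda>z. \<phi> z l) = m (\<lambda>z. \<Sum>k\<in>K. (A k z - B k z))"
      unfolding \<phi>_def A_def B_def by simp
    also have "\<dots> = (\<Sum>k\<in>K. m (\<lambda>z. A k z - B k z))"
      by (rule m_sum[OF mean finK]) (intro linf_diff linfA linfB)
    also have "\<dots> = 0" using m_diff[OF mean linfA linfB] mAB by simp
    finally have m0: "m (\<lambda>z. \<phi> z l) = 0" .
    have "linf (\<lambda>z. \<phi> z l)"
      unfolding \<phi>_def using linf_sum[OF finK, of "\<lambda>k z. A k z - B k z"] linf_diff[OF linfA linfB]
      unfolding A_def B_def by simp
    then have "e \<le> m (\<lambda>z. \<phi> z l)" using m_lower[OF mean] ge by blast
    then show False using m0 e by simp
  qed
  have cmp: "compact \<Lambda>"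
  proof -
    have "\<Lambda> = PiE UNIV (\<lambda>_. {0..1::real})" unfolding \<Lambda>_def PiE_def Pi_def by auto
    moreover have "compactin (product_topology (\<lambda>_. euclidean) UNIV) (PiE UNIV (\<lambda>_::('a \<times> 'a). {0..1::real}))"
      by (simp add: compactin_PiE)
    ultimately show ?thesis by (simp add: euclidean_product_topology)
  qed
  have contphi: "continuous_on UNIV (\<phi> z)" for z
    unfolding \<phi>_def by (intro continuous_intros continuous_on_product_coordinates)
  have opn: "open {l. \<phi> z l < e}" for z
    by (rule open_Collect_less[OF contphi continuous_on_const])
  have cov: "\<Lambda> \<subseteq> (\<Union>z\<in>UNIV. {l. \<phi> z l < e})" using step1 by blast
  obtain Z where Z: "finite Z" "\<Lambda> \<subseteq> (\<Union>z\<in>Z. {l. \<phi> z l < e})"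
  proof (rule compactE_image[OF cmp opn cov])
    fix C' assume "C' \<subseteq> UNIV" "finite C'" "\<Lambda> \<subseteq> (\<Union>c\<in>C'. {l. \<phi> c l < e})"
    then show thesis using that by blast
  qed
  have zeroL: "(\<lambda>_. 0) \<in> \<Lambda>" unfolding \<Lambda>_def by simp
  have Zne: "Z \<noteq> {}" using Z(2) zeroL by blast
  have cvL: "cvx \<Lambda>" unfolding \<Lambda>_def by (rule cvx_box)
  have afphi: "aff \<Lambda> (\<phi> z)" for z
    unfolding \<phi>_def by (rule aff_phi)
  obtain t where t: "\<forall>z\<in>Z. 0 \<le> t z" "sum t Z = 1" "\<forall>l\<in>\<Lambda>. (\<Sum>z\<in>Z. t z * \<phi> z l) \<le> e"
  proof -
    have c1: "\<forall>z\<in>Z. aff \<Lambda> (\<phi> z)" using afphi by blast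
    have c2: "\<forall>l\<in>\<Lambda>. \<exists>z\<in>Z. \<phi> z l \<le> e"
    proof
      fix l assume "l \<in> \<Lambda>"
      then obtain z where "z \<in> Z" "\<phi> z l < e" using Z(2) by blast
      then show "\<exists>z\<in>Z. \<phi> z l \<le> e" by (intro bexI[of _ z]) auto
    qed
    show ?thesis using kneser[OF Z(1) Zne cvL c1 c2] that by blast
  qed
  \<comment> \<open>Step 4: the weights give an almost invariant vector\<close>
  define p where "p = (\<lambda>x. if x \<in> Z then t x else 0)"
  have pnn: "\<forall>x. 0 \<le> p x" using t(1) unfolding p_def by auto
  have poff: "\<forall>x. x \<notin> Z \<longrightarrow> p x = 0" unfolding p_def by auto
  have psum: "(\<Sum>x\<in>Z. p x) = 1" using t(2) unfolding p_def by simp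
  define ls where "ls = (\<lambda>(k, x). if p x > p (act k x) then 1 else (0::real))"
  have lsL: "ls \<in> \<Lambda>" unfolding \<Lambda>_def ls_def by auto
  have inner: "(\<Sum>z\<in>Z. p z * (\<Sum>x\<in>pre k z. ls (k, x))) = (\<Sum>x\<in>Z. p (act k x) * ls (k, x))" for k
  proof -
    define D where "D = {x. act k x \<in> Z}"
    have Dun: "D = (\<Union>z\<in>Z. pre k z)" unfolding D_def pre_def by auto
    have finpre: "\<And>z. finite (pre k z)" unfolding pre_def using pre_finite[OF inj[of k]] by blast
    have finD: "finite D" unfolding Dun using Z(1) finpre by blast
    have "(\<Sum>x\<in>D. p (act k x) * ls (k, x)) = (\<Sum>z\<in>Z. (\<Sum>x\<in>pre k z. p (act k x) * ls (k, x)))"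
      unfolding Dun by (rule sum.UNION_disjoint[OF Z(1)]) (use finpre in \<open>auto simp: pre_def\<close>)
    also have "\<dots> = (\<Sum>z\<in>Z. p z * (\<Sum>x\<in>pre k z. ls (k, x)))"
      by (intro sum.cong refl) (auto simp: sum_distrib_left pre_def)
    finally have eq1: "(\<Sum>z\<in>Z. p z * (\<Sum>x\<in>pre k z. ls (k, x))) = (\<Sum>x\<in>D. p (act k x) * ls (k, x))" by simp
    have "(\<Sum>x\<in>D. p (act k x) * ls (k, x)) = (\<Sum>x\<in>D \<union> Z. p (act k x) * ls (k, x))"
    proof (rule sum.mono_neutral_left)
      show "\<forall>i\<in>D \<union> Z - D. p (act k i) * ls (k, i) = 0" unfolding D_def using poff by auto
    qed (use finD Z(1) in auto)
    also have "\<dots> = (\<Sum>x\<in>Z. p (act k x) * ls (k, x))"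
    proof (rule sum.mono_neutral_right)
      show "\<forall>i\<in>D \<union> Z - Z. p (act k i) * ls (k, i) = 0" unfolding ls_def using poff pnn
        by (auto simp: not_less)
    qed (use finD Z(1) in auto)
    finally show ?thesis using eq1 by simp
  qed
  have ident: "(\<Sum>z\<in>Z. t z * \<phi> z ls) = (\<Sum>k\<in>K. \<Sum>x\<in>Z. max 0 (p x - p (act k x)))"
  proof -
    have "(\<Sum>z\<in>Z. t z * \<phi> z ls) = (\<Sum>z\<in>Z. p z * \<phi> z ls)" unfolding p_def by simp
    also have "\<dots> = (\<Sum>z\<in>Z. \<Sum>k\<in>K. p z * ls (k, z) - p z * (\<Sum>x\<in>pre k z. ls (k, x)))"
      unfolding \<phi>_def by (simp add: sum_distrib_left right_diff_distrib)
    also have "\<dots> = (\<Sum>k\<in>K. \<Sum>z\<in>Z. p z * ls (k, z) - p z * (\<Sum>x\<in>pre k z. ls (k, x)))"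
      by (rule sum.swap)
    also have "\<dots> = (\<Sum>k\<in>K. (\<Sum>z\<in>Z. p z * ls (k, z)) - (\<Sum>x\<in>Z. p (act k x) * ls (k, x)))"
      by (simp add: sum_subtractf inner)
    also have "\<dots> = (\<Sum>k\<in>K. \<Sum>x\<in>Z. max 0 (p x - p (act k x)))"
      by (intro sum.cong refl) (auto simp: sum_subtractf[symmetric] ls_def intro!: sum.cong)
    finally show ?thesis .
  qed
  have small: "(\<Sum>k\<in>K. \<Sum>x\<in>Z. max 0 (p x - p (act k x))) \<le> e * (\<Sum>x\<in>Z. p x)"
  proof -
    have "(\<Sum>z\<in>Z. t z * \<phi> z ls) \<le> e" using t(3) lsL by blast
    then show ?thesis using ident psum by simp
  qed
  obtain F where F: "F \<subseteq> Z" "F \<noteq> {}" "(\<Sum>k\<in>K. real (card {x\<in>F. act k x \<notin> F})) \<le> e * real (card F)"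
    using namioka[OF Z(1) pnn poff refl _ small] psum by auto
  then show ?thesis using finite_subset[OF F(1) Z(1)] by blast
qed



lemma card_transfer:
  assumes b: "bij_betw h F X"
  shows "card {j\<in>X. Q (inv_into F h j)} = card {x\<in>F. Q x}"
proof -
  have "{j\<in>X. Q (inv_into F h j)} = h ` {x\<in>F. Q x}"
  proof
    show "{j\<in>X. Q (inv_into F h j)} \<subseteq> h ` {x\<in>F. Q x}"
    proof
      fix j assume j: "j \<in> {j\<in>X. Q (inv_into F h j)}"
      then have jX: "j \<in> X" and jQ: "Q (inv_into F h j)" by auto
      have i1: "inv_into F h j \<in> F" using bij_betw_apply[OF bij_betw_inv_into[OF b] jX] .
      have i2: "h (inv_into F h j) = j" using bij_betw_inv_into_right[OF b jX] .
      show "j \<in> h ` {x\<in>F. Q x}"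
        by (rule image_eqI[of _ _ "inv_into F h j"]) (use i1 i2 jQ in auto)
    qed
  next
    show "h ` {x\<in>F. Q x} \<subseteq> {j\<in>X. Q (inv_into F h j)}"
    proof
      fix j assume "j \<in> h ` {x\<in>F. Q x}"
      then obtain x where x: "x \<in> F" "Q x" "j = h x" by blast
      have "inv_into F h j = x" using bij_betw_inv_into_left[OF b x(1)] x(3) by simp
      moreover have "j \<in> X" using bij_betw_apply[OF b x(1)] x(3) by simp
      ultimately show "j \<in> {j\<in>X. Q (inv_into F h j)}" using x(2) by simp
    qed
  qed
  moreover have "inj_on h {x\<in>F. Q x}" by (rule inj_on_subset[of h F]) (use b in \<open>auto simp: bij_betw_def\<close>)
  ultimately show ?thesis by (simp add: card_image)
qed

lemma hamming_le: "finite X \<Longrightarrow> X \<noteq> {} \<Longrightarrow> real (card {x\<in>X. f x \<noteq> g x}) \<le> e * real (card X) \<Longrightarrow> hamming X f g \<le> e"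
  unfolding hamming_def by (simp add: divide_le_eq card_gt_0_iff)

lemma hamming_ge: "finite X \<Longrightarrow> X \<noteq> {} \<Longrightarrow> real (card {x\<in>X. f x \<noteq> g x}) \<ge> e * real (card X) \<Longrightarrow> hamming X f g \<ge> e"
  unfolding hamming_def by (simp add: le_divide_eq card_gt_0_iff)

lemma sofic_from_rel:
  fixes R :: "'m::monoid_mult \<Rightarrow> 'a \<Rightarrow> 'a \<Rightarrow> bool" and F :: "'a set" and K :: "'m set"
  assumes finF: "finite F" and neF: "F \<noteq> {}" and eps: "\<epsilon> > 0"
    and func: "\<And>a x y y'. R a x y \<Longrightarrow> R a x y' \<Longrightarrow> y = y'"
    and comp: "\<And>k1 k2 x y w. R k2 x y \<Longrightarrow> R k1 y w \<Longrightarrow> R (k1 * k2) x w"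
    and comp': "\<And>k1 k2 x y w. R k2 x y \<Longrightarrow> R (k1 * k2) x w \<Longrightarrow> R k1 y w"
    and one: "\<And>x. R 1 x x"
    and sep: "\<And>k1 k2 x y. k1 \<noteq> k2 \<Longrightarrow> R k1 x y \<Longrightarrow> R k2 x y \<Longrightarrow> False"
    and bound: "\<And>k. k \<in> K \<Longrightarrow> real (card {x\<in>F. \<not> (\<exists>y\<in>F. R k x y)}) \<le> (\<epsilon> / 2) * real (card F)"
  shows "\<exists>(X::nat set) (\<psi>::'m \<Rightarrow> nat \<Rightarrow> nat). finite X \<and> X \<noteq> {} \<and>
        (\<forall>a. \<psi> a ` X \<subseteq> X) \<and>
        (\<forall>k1\<in>K. \<forall>k2\<in>K. hamming X (\<psi> (k1 * k2)) (\<psi> k1 \<circ> \<psi> k2) \<le> \<epsilon>) \<and>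
        hamming X (\<psi> 1) id \<le> \<epsilon> \<and>
        (\<forall>k1\<in>K. \<forall>k2\<in>K. k1 \<noteq> k2 \<longrightarrow> hamming X (\<psi> k1) (\<psi> k2) \<ge> 1 - \<epsilon>)"
proof -
  obtain x0 where x0: "x0 \<in> F" using neF by blast
  define \<phi> where "\<phi> = (\<lambda>a x. if \<exists>y\<in>F. R a x y then (SOME y. y \<in> F \<and> R a x y) else x0)"
  have \<phi>F: "\<phi> a x \<in> F" for a x
    unfolding \<phi>_def using x0 by (auto intro: someI2_ex)
  have \<phi>R: "\<phi> a x = y" if "y \<in> F" "R a x y" for a x y
  proof -
    have ex: "\<exists>y\<in>F. R a x y" using that by blast
    have "R a x (SOME y. y \<in> F \<and> R a x y)" using someI_ex[of "\<lambda>y. y \<in> F \<and> R a x y"] ex by blast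
    then show ?thesis unfolding \<phi>_def using ex func that by auto
  qed
  have \<phi>0: "\<phi> a x = x0" if "\<not> (\<exists>y\<in>F. R a x y)" for a x
    unfolding \<phi>_def using that by auto
  define bad where "bad = (\<lambda>k. {x\<in>F. \<not> (\<exists>y\<in>F. R k x y)})"
  have cnt_comp: "real (card {x\<in>F. \<phi> (k1 * k2) x \<noteq> \<phi> k1 (\<phi> k2 x)}) \<le> \<epsilon> * real (card F)"
    if "k1 \<in> K" "k2 \<in> K" for k1 k2
  proof -
    have "{x\<in>F. \<phi> (k1 * k2) x \<noteq> \<phi> k1 (\<phi> k2 x)} \<subseteq> bad k2"
    proof
      fix x assume x: "x \<in> {x\<in>F. \<phi> (k1 * k2) x \<noteq> \<phi> k1 (\<phi> k2 x)}"
      show "x \<in> bad k2"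
      proof (rule ccontr)
        assume "x \<notin> bad k2"
        then obtain y where y: "y \<in> F" "R k2 x y" using x unfolding bad_def by auto
        have e2: "\<phi> k2 x = y" using \<phi>R y by blast
        show False
        proof (cases "\<exists>w\<in>F. R k1 y w")
          case True
          then obtain w where w: "w \<in> F" "R k1 y w" by blast
          have "\<phi> k1 y = w" using \<phi>R w by blast
          moreover have "\<phi> (k1 * k2) x = w" using \<phi>R w comp y by blast
          ultimately show False using x e2 by simp
        next
          case False
          then have a: "\<phi> k1 y = x0" using \<phi>0 by blast
          have "\<not> (\<exists>w\<in>F. R (k1 * k2) x w)" using False comp' y by blast
          then have "\<phi> (k1 * k2) x = x0" using \<phi>0 by blast
          then show False using x e2 a by simp
        qed
      qed
    qed
    then have "card {x\<in>F. \<phi> (k1 * k2) x \<noteq> \<phi> k1 (\<phi> k2 x)} \<le> card (bad k2)"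
      using finF unfolding bad_def by (intro card_mono) auto
    then have "real (card {x\<in>F. \<phi> (k1 * k2) x \<noteq> \<phi> k1 (\<phi> k2 x)}) \<le> (\<epsilon> / 2) * real (card F)"
      using bound[OF that(2)] unfolding bad_def by linarith
    also have "\<dots> \<le> \<epsilon> * real (card F)" using eps by (simp add: mult_right_mono)
    finally show ?thesis .
  qed
  have cnt_one: "{x\<in>F. \<phi> 1 x \<noteq> x} = {}" using \<phi>R one by auto
  have cnt_sep: "real (card {x\<in>F. \<phi> k1 x \<noteq> \<phi> k2 x}) \<ge> (1 - \<epsilon>) * real (card F)"
    if "k1 \<in> K" "k2 \<in> K" "k1 \<noteq> k2" for k1 k2
  proof -
    have sub: "{x\<in>F. \<not> (\<phi> k1 x \<noteq> \<phi> k2 x)} \<subseteq> bad k1 \<union> bad k2"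
    proof
      fix x assume x: "x \<in> {x\<in>F. \<not> (\<phi> k1 x \<noteq> \<phi> k2 x)}"
      show "x \<in> bad k1 \<union> bad k2"
      proof (rule ccontr)
        assume "x \<notin> bad k1 \<union> bad k2"
        then obtain y1 y2 where y: "y1 \<in> F" "R k1 x y1" "y2 \<in> F" "R k2 x y2" using x unfolding bad_def by auto
        then have "y1 = y2" using \<phi>R x by force
        then show False using sep[OF that(3)] y by blast
      qed
    qed
    have "card {x\<in>F. \<not> (\<phi> k1 x \<noteq> \<phi> k2 x)} \<le> card (bad k1 \<union> bad k2)"
      using finF sub unfolding bad_def by (intro card_mono) auto
    also have "\<dots> \<le> card (bad k1) + card (bad k2)" by (rule card_Un_le)
    finally have le: "real (card {x\<in>F. \<not> (\<phi> k1 x \<noteq> \<phi> k2 x)}) \<le> \<epsilon> * real (card F)"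
      using bound[OF that(1)] bound[OF that(2)] unfolding bad_def by linarith
    have "card {x\<in>F. \<phi> k1 x \<noteq> \<phi> k2 x} + card {x\<in>F. \<not> (\<phi> k1 x \<noteq> \<phi> k2 x)} = card F"
    proof -
      have "F = {x\<in>F. \<phi> k1 x \<noteq> \<phi> k2 x} \<union> {x\<in>F. \<not> (\<phi> k1 x \<noteq> \<phi> k2 x)}" by auto
      moreover have "card ({x\<in>F. \<phi> k1 x \<noteq> \<phi> k2 x} \<union> {x\<in>F. \<not> (\<phi> k1 x \<noteq> \<phi> k2 x)}) =
          card {x\<in>F. \<phi> k1 x \<noteq> \<phi> k2 x} + card {x\<in>F. \<not> (\<phi> k1 x \<noteq> \<phi> k2 x)}"
        using finF by (intro card_Un_disjoint) auto
      ultimately show ?thesis by simp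
    qed
    then show ?thesis using le by (simp add: algebra_simps)
  qed
  obtain h where h: "bij_betw h F {0..<card F}" using ex_bij_betw_finite_nat[OF finF] by blast
  define X where "X = {0..<card F}"
  define g where "g = inv_into F h"
  have gF: "j \<in> X \<Longrightarrow> g j \<in> F" for j
    unfolding g_def X_def using h by (metis bij_betw_def inv_into_into)
  have hX: "x \<in> F \<Longrightarrow> h x \<in> X" for x unfolding X_def using h by (meson bij_betw_apply)
  have gh: "x \<in> F \<Longrightarrow> g (h x) = x" for x unfolding g_def using h by (simp add: bij_betw_inv_into_left)
  have injh: "x \<in> F \<Longrightarrow> y \<in> F \<Longrightarrow> h x = h y \<longleftrightarrow> x = y" for x y
    using h unfolding bij_betw_def inj_on_def by blast
  define \<psi> where "\<psi> = (\<lambda>a j. if j \<in> X then h (\<phi> a (g j)) else j)"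
  have finX: "finite X" "X \<noteq> {}" unfolding X_def using finF neF by auto
  have cardX: "card X = card F" unfolding X_def by simp
  have ct: "card {j\<in>X. Q (g j)} = card {x\<in>F. Q x}" for Q
    unfolding g_def X_def by (rule card_transfer[OF h])
  have maps: "\<forall>a. \<psi> a ` X \<subseteq> X" unfolding \<psi>_def using hX \<phi>F by auto
  have c1: "hamming X (\<psi> (k1 * k2)) (\<psi> k1 \<circ> \<psi> k2) \<le> \<epsilon>" if "k1 \<in> K" "k2 \<in> K" for k1 k2
  proof (rule hamming_le[OF finX])
    have "(\<psi> (k1 * k2) j \<noteq> (\<psi> k1 \<circ> \<psi> k2) j) = (\<phi> (k1 * k2) (g j) \<noteq> \<phi> k1 (\<phi> k2 (g j)))"
      if j: "j \<in> X" for j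
    proof -
      have a: "\<psi> k2 j = h (\<phi> k2 (g j))" unfolding \<psi>_def using j by simp
      have b: "h (\<phi> k2 (g j)) \<in> X" using hX \<phi>F by blast
      have c: "\<psi> k1 (\<psi> k2 j) = h (\<phi> k1 (\<phi> k2 (g j)))" unfolding a using b gh[OF \<phi>F] unfolding \<psi>_def by simp
      have d: "\<psi> (k1 * k2) j = h (\<phi> (k1 * k2) (g j))" unfolding \<psi>_def using j by simp
      show ?thesis unfolding comp_def c d using injh[OF \<phi>F \<phi>F] by simp
    qed
    then have "{j\<in>X. \<psi> (k1 * k2) j \<noteq> (\<psi> k1 \<circ> \<psi> k2) j} = {j\<in>X. \<phi> (k1 * k2) (g j) \<noteq> \<phi> k1 (\<phi> k2 (g j))}"
      by blast
    then show "real (card {j\<in>X. \<psi> (k1 * k2) j \<noteq> (\<psi> k1 \<circ> \<psi> k2) j}) \<le> \<epsilon> * real (card X)"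
      using ct[of "\<lambda>x. \<phi> (k1 * k2) x \<noteq> \<phi> k1 (\<phi> k2 x)"] cnt_comp[OF that] cardX by simp
  qed
  have c2: "hamming X (\<psi> 1) id \<le> \<epsilon>"
  proof (rule hamming_le[OF finX])
    have "\<psi> 1 j = j" if j: "j \<in> X" for j
    proof -
      have "\<phi> 1 (g j) = g j" using cnt_one gF[OF j] by blast
      moreover have "h (g j) = j" using j unfolding g_def X_def by (meson bij_betw_inv_into_right h)
      ultimately show ?thesis unfolding \<psi>_def using j by simp
    qed
    then have e: "{j\<in>X. \<psi> 1 j \<noteq> id j} = {}" by auto
    show "real (card {j\<in>X. \<psi> 1 j \<noteq> id j}) \<le> \<epsilon> * real (card X)"
      unfolding e using eps by simp
  qed
  have c3: "hamming X (\<psi> k1) (\<psi> k2) \<ge> 1 - \<epsilon>" if "k1 \<in> K" "k2 \<in> K" "k1 \<noteq> k2" for k1 k2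
  proof (rule hamming_ge[OF finX])
    have "\<forall>j\<in>X. (\<psi> k1 j \<noteq> \<psi> k2 j) = (\<phi> k1 (g j) \<noteq> \<phi> k2 (g j))"
      using injh[OF \<phi>F \<phi>F] unfolding \<psi>_def by simp
    then have "{j\<in>X. \<psi> k1 j \<noteq> \<psi> k2 j} = {j\<in>X. \<phi> k1 (g j) \<noteq> \<phi> k2 (g j)}" by blast
    then show "real (card {j\<in>X. \<psi> k1 j \<noteq> \<psi> k2 j}) \<ge> (1 - \<epsilon>) * real (card X)"
      using ct[of "\<lambda>x. \<phi> k1 x \<noteq> \<phi> k2 x"] cnt_sep[OF that] cardX by simp
  qed
  show ?thesis
  proof (intro exI[of _ X] exI[of _ \<psi>] conjI)
    show "\<forall>k1\<in>K. \<forall>k2\<in>K. hamming X (\<psi> (k1 * k2)) (\<psi> k1 \<circ> \<psi> k2) \<le> \<epsilon>" using c1 by blast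
    show "\<forall>k1\<in>K. \<forall>k2\<in>K. k1 \<noteq> k2 \<longrightarrow> 1 - \<epsilon> \<le> hamming X (\<psi> k1) (\<psi> k2)" using c3 by blast
  qed (use finX maps c2 in auto)
qed



lemma right_count:
  fixes F :: "'a::monoid_mult set"
  assumes finF: "finite F" and rc: "\<And>s t t'::'a. t * s = t' * s \<Longrightarrow> t = t'"
  shows "card {x\<in>F. \<not> (\<exists>y\<in>F. y * k = x)} = card {y\<in>F. y * k \<notin> F}"
proof -
  define Fk where "Fk = (\<lambda>y. y * k) ` F"
  have inj: "inj_on (\<lambda>y. y * k) A" for A using rc unfolding inj_on_def by blast
  have cFk: "card Fk = card F" unfolding Fk_def using inj by (simp add: card_image)
  have finFk: "finite Fk" unfolding Fk_def using finF by simp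
  have e1: "{x\<in>F. \<not> (\<exists>y\<in>F. y * k = x)} = F - Fk" unfolding Fk_def by auto
  have e2: "(\<lambda>y. y * k) ` {y\<in>F. y * k \<notin> F} = Fk - F" unfolding Fk_def by auto
  have "card {y\<in>F. y * k \<notin> F} = card (Fk - F)" using e2 inj by (metis card_image)
  also have "\<dots> = card Fk - card (Fk \<inter> F)" using finFk by (simp add: card_Diff_subset_Int)
  also have "\<dots> = card F - card (F \<inter> Fk)" using cFk by (simp add: Int_commute)
  also have "\<dots> = card (F - Fk)" using finF by (simp add: card_Diff_subset_Int)
  finally show ?thesis using e1 by simp
qed

lemma sum_term_le:
  fixes f :: "'b \<Rightarrow> nat"
  assumes "finite K" "k \<in> K" "(\<Sum>k\<in>K. real (f k)) \<le> B"
  shows "real (f k) \<le> B"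
proof -
  have "real (f k) \<le> (\<Sum>k\<in>K. real (f k))" using assms by (intro member_le_sum) auto
  then show ?thesis using assms(3) by simp
qed

theorem proposition4p7:
  assumes "cancellative TYPE('a::monoid_mult)"
    and "left_amenable TYPE('a) \<or> right_amenable TYPE('a)"
  shows "sofic TYPE('a)"
  unfolding sofic_def
proof (intro allI impI)
  fix K :: "'a set" and \<epsilon> :: real
  assume finK: "finite K" and eps: "\<epsilon> > 0"
  have lc: "\<And>s t t'::'a. s * t = s * t' \<Longrightarrow> t = t'" and rc: "\<And>s t t'::'a. t * s = t' * s \<Longrightarrow> t = t'"
    using assms(1) unfolding cancellative_def by blast+
  have eps2: "\<epsilon> / 2 > 0" using eps by simp
  from assms(2) show "\<exists>(X::nat set) (\<phi>::'a \<Rightarrow> nat \<Rightarrow> nat). finite X \<and> X \<noteq> {} \<and>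
        (\<forall>a. \<phi> a ` X \<subseteq> X) \<and>
        (\<forall>k1\<in>K. \<forall>k2\<in>K. hamming X (\<phi> (k1 * k2)) (\<phi> k1 \<circ> \<phi> k2) \<le> \<epsilon>) \<and>
        hamming X (\<phi> 1) id \<le> \<epsilon> \<and>
        (\<forall>k1\<in>K. \<forall>k2\<in>K. k1 \<noteq> k2 \<longrightarrow> hamming X (\<phi> k1) (\<phi> k2) \<ge> 1 - \<epsilon>)"
  proof
    assume "left_amenable TYPE('a)"
    then obtain m :: "('a \<Rightarrow> real) \<Rightarrow> real" where m: "is_mean m" "\<forall>s f. linf f \<longrightarrow> m (\<lambda>x. f (s * x)) = m f"
      unfolding left_amenable_def by blast
    have injact: "\<forall>k x y. k * x = k * y \<longrightarrow> x = (y::'a)" using lc by blast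
    obtain F where F: "finite F" "F \<noteq> {}" "(\<Sum>k\<in>K. real (card {x\<in>F. k * x \<notin> F})) \<le> (\<epsilon> / 2) * real (card F)"
      using folner_core[OF m(1) m(2) injact finK eps2] by blast
    have bnd: "real (card {x\<in>F. \<not> (\<exists>y\<in>F. y = k * x)}) \<le> (\<epsilon> / 2) * real (card F)" if "k \<in> K" for k
    proof -
      have "{x\<in>F. \<not> (\<exists>y\<in>F. y = k * x)} = {x\<in>F. k * x \<notin> F}" by auto
      then show ?thesis using sum_term_le[OF finK that F(3)] by simp
    qed
    have f1: "\<And>a x y y'. y = a * x \<Longrightarrow> y' = a * x \<Longrightarrow> y = (y'::'a)" by simp
    have f2: "\<And>k1 k2 x y w. y = k2 * x \<Longrightarrow> w = k1 * y \<Longrightarrow> w = k1 * k2 * (x::'a)" by (simp add: mult.assoc)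
    have f3: "\<And>k1 k2 x y w. y = k2 * x \<Longrightarrow> w = k1 * k2 * x \<Longrightarrow> w = k1 * (y::'a)" by (simp add: mult.assoc)
    have f4: "\<And>x. x = 1 * (x::'a)" by simp
    have f5: "\<And>k1 k2 x y. k1 \<noteq> k2 \<Longrightarrow> y = k1 * x \<Longrightarrow> y = k2 * (x::'a) \<Longrightarrow> False"
    proof -
      fix k1 k2 x y :: 'a assume "k1 \<noteq> k2" "y = k1 * x" "y = k2 * x"
      then show False using rc[where s = x and t = k1 and t' = k2] by simp
    qed
    show ?thesis
      by (rule sofic_from_rel[OF F(1) F(2) eps, where R = "\<lambda>a x y. y = a * x" and K = K, OF f1 f2 f3 f4 f5 bnd])
  next
    assume "right_amenable TYPE('a)"
    then obtain m :: "('a \<Rightarrow> real) \<Rightarrow> real" where m: "is_mean m" "\<forall>s f. linf f \<longrightarrow> m (\<lambda>x. f (x * s)) = m f"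
      unfolding right_amenable_def by blast
    have injact: "\<forall>k x y. x * k = y * k \<longrightarrow> x = (y::'a)" using rc by blast
    obtain F where F: "finite F" "F \<noteq> {}" "(\<Sum>k\<in>K. real (card {x\<in>F. x * k \<notin> F})) \<le> (\<epsilon> / 2) * real (card F)"
      using folner_core[OF m(1) m(2) injact finK eps2] by blast
    have bnd: "real (card {x\<in>F. \<not> (\<exists>y\<in>F. y * k = x)}) \<le> (\<epsilon> / 2) * real (card F)" if "k \<in> K" for k
      using sum_term_le[OF finK that F(3)] right_count[OF F(1) rc, where k = k] by simp
    have comp': "w * k1 = y" if "y * k2 = x" "w * (k1 * k2) = x" for k1 k2 x y w :: 'a
      using rc[where s = k2 and t = "w * k1" and t' = y] that by (simp add: mult.assoc)
    have f1: "\<And>a x y y'. y * a = x \<Longrightarrow> y' * a = x \<Longrightarrow> y = (y'::'a)"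
    proof -
      fix a x y y' :: 'a assume "y * a = x" "y' * a = x"
      then show "y = y'" using rc[where s = a and t = y and t' = y'] by simp
    qed
    have f2: "\<And>k1 k2 x y w. y * k2 = x \<Longrightarrow> w * k1 = y \<Longrightarrow> w * (k1 * k2) = (x::'a)" by (simp add: mult.assoc[symmetric])
    have f3: "\<And>k1 k2 x y w. y * k2 = x \<Longrightarrow> w * (k1 * k2) = x \<Longrightarrow> w * k1 = (y::'a)" using comp' by blast
    have f4: "\<And>x. x * 1 = (x::'a)" by simp
    have f5: "\<And>k1 k2 x y. k1 \<noteq> k2 \<Longrightarrow> y * k1 = x \<Longrightarrow> y * k2 = (x::'a) \<Longrightarrow> False"
    proof -
      fix k1 k2 x y :: 'a assume "k1 \<noteq> k2" "y * k1 = x" "y * k2 = x"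
      then show False using lc[where s = y and t = k1 and t' = k2] by simp
    qed
    show ?thesis
      by (rule sofic_from_rel[OF F(1) F(2) eps, where R = "\<lambda>a x y. y * a = x" and K = K, OF f1 f2 f3 f4 f5 bnd])
  qed
qed


end
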